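(* Let $A$ be a finite additive poset and $a\in A$ nonzero. The following are equivalent: (i) $a$ is a tile; (ii) the tail $A_a$ is isomorphic (as an additive poset) to an additive powerset $2^I$ for some set $I$; (iii) all atoms of $A_a$ are pairwise independent and their sum equals $a$; (iv) the expansion of $a$ as a sum of pairwise independent atoms of $A$ is unique up to permutation of the atoms.
   Context: An additive poset is a pair $(A,\le)$ where $A$ is an abelian group and $\le$ is a partial order on $A$ such that for all $a,b,c\in A$: $(\ast)$ if $b\le a$ and $c\le a$ then $b+c\le a$; $(\ast\ast)$ if $a\le b$ and $a\le c$ then $a\le a+b+c$. The tail $A_a=\{x:x\le a\}$ is an additive subposet. Elements $x,y$ are independent if $x\le x+y$. An atom is a nonzero $x$ with $A_x=\{0,x\}$. A tile is a nonzero $a$ such that any two distinct atoms of $A$ in $A_a$ are independent. For a set $I$, the additive powerset $2^I$ is the set of subsets of $I$ with symmetric difference as addition and inclusion as order. Isomorphism of additive posets means a bijection which is a group and order isomorphism. *)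

theory Defs
  imports "HOL-Library.Multiset"
begin

definition additive_poset :: "('a::ab_group_add \<Rightarrow> 'a \<Rightarrow> bool) \<Rightarrow> bool" where
  "additive_poset le \<longleftrightarrow>
     (\<forall>x. le x x) \<and>
     (\<forall>x y. le x y \<and> le y x \<longrightarrow> x = y) \<and>
     (\<forall>x y z. le x y \<and> le y z \<longrightarrow> le x z) \<and>
     (\<forall>a b c. le b a \<and> le c a \<longrightarrow> le (b + c) a) \<and>
     (\<forall>a b c. le a b \<and> le a c \<longrightarrow> le a (a + b + c))"

definition tail :: "('a \<Rightarrow> 'a \<Rightarrow> bool) \<Rightarrow> 'a \<Rightarrow> 'a set" where
  "tail le a = {x. le x a}"

definition independent :: "('a::ab_group_add \<Rightarrow> 'a \<Rightarrow> bool) \<Rightarrow> 'a \<Rightarrow> 'a \<Rightarrow> bool" where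
  "independent le x y \<longleftrightarrow> le x (x + y)"

definition atom_in :: "('a::ab_group_add \<Rightarrow> 'a \<Rightarrow> bool) \<Rightarrow> 'a set \<Rightarrow> 'a \<Rightarrow> bool" where
  "atom_in le S x \<longleftrightarrow> x \<noteq> 0 \<and> x \<in> S \<and> {y \<in> S. le y x} = {0, x}"

abbreviation atom :: "('a::ab_group_add \<Rightarrow> 'a \<Rightarrow> bool) \<Rightarrow> 'a \<Rightarrow> bool" where
  "atom le x \<equiv> atom_in le UNIV x"

definition tile :: "('a::ab_group_add \<Rightarrow> 'a \<Rightarrow> bool) \<Rightarrow> 'a \<Rightarrow> bool" where
  "tile le a \<longleftrightarrow> a \<noteq> 0 \<and>
     (\<forall>x y. atom le x \<and> atom le y \<and> x \<in> tail le a \<and> y \<in> tail le a \<and> x \<noteq> y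
        \<longrightarrow> independent le x y)"

definition iso_powerset :: "('a::ab_group_add \<Rightarrow> 'a \<Rightarrow> bool) \<Rightarrow> 'a set \<Rightarrow> ('a \<Rightarrow> 'b set) \<Rightarrow> 'b set \<Rightarrow> bool" where
  "iso_powerset le S f I \<longleftrightarrow> bij_betw f S (Pow I) \<and>
     (\<forall>x\<in>S. \<forall>y\<in>S. f (x + y) = (f x - f y) \<union> (f y - f x)) \<and>
     (\<forall>x\<in>S. \<forall>y\<in>S. le x y \<longleftrightarrow> f x \<subseteq> f y)"

definition atom_expansion :: "('a::ab_group_add \<Rightarrow> 'a \<Rightarrow> bool) \<Rightarrow> 'a \<Rightarrow> 'a list \<Rightarrow> bool" where
  "atom_expansion le a xs \<longleftrightarrow> (\<forall>x\<in>set xs. atom le x) \<and>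
     (\<forall>i<length xs. \<forall>j<length xs. i \<noteq> j \<longrightarrow> independent le (xs ! i) (xs ! j)) \<and>
     sum_list xs = a"

end

theory Submission
  imports Defs
begin

fun rep :: "nat \<Rightarrow> 'a::ab_group_add \<Rightarrow> 'a" where
  "rep 0 a = 0" | "rep (Suc k) a = a + rep k a"

lemma rep_add: "rep (i + j) a = rep i a + rep j a"
  by (induction i) (auto simp: algebra_simps)

locale ap =
  fixes le :: "'a::ab_group_add \<Rightarrow> 'a \<Rightarrow> bool"
  assumes ap: "additive_poset le" and fin: "finite (UNIV :: 'a set)"
begin

lemma refl: "le x x" using ap unfolding additive_poset_def by blast
lemma antisym: "le x y \<Longrightarrow> le y x \<Longrightarrow> x = y" using ap unfolding additive_poset_def by blast
lemma trans: "le x y \<Longrightarrow> le y z \<Longrightarrow> le x z" using ap unfolding additive_poset_def by blast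
lemma closed: "le b a \<Longrightarrow> le c a \<Longrightarrow> le (b + c) a" using ap unfolding additive_poset_def by blast
lemma ax2: "le a b \<Longrightarrow> le a c \<Longrightarrow> le a (a + b + c)" using ap unfolding additive_poset_def by blast

lemma fin_set: "finite (S::'a set)" using finite_subset[OF subset_UNIV fin] .

lemma rep_le: "k \<ge> 1 \<Longrightarrow> le (rep k a) a"
proof (induction k)
  case 0 then show ?case by simp
next
  case (Suc k)
  show ?case
  proof (cases "k = 0")
    case True then show ?thesis by (simp add: refl)
  next
    case False then show ?thesis using Suc by (simp add: closed refl)
  qed
qed

lemma rep_period: "\<exists>n\<ge>1. rep n (a::'a) = 0"
proof -
  have "\<not> inj (\<lambda>k. rep k a)"
  proof
    assume "inj (\<lambda>k. rep k a)"
    then have "infinite (range (\<lambda>k. rep k a))" using finite_imageD infinite_UNIV_nat by blast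
    then show False using fin_set[of "range (\<lambda>k. rep k a)"] by blast
  qed
  then obtain i j where "i \<noteq> j" "rep i a = rep j a" unfolding inj_def by blast
  then obtain i j where ij: "i < j" "rep i a = rep j a" by (metis linorder_neqE_nat)
  have "rep j a = rep (j - i) a + rep i a" using rep_add[of "j-i" i a] ij by simp
  then have "rep (j-i) a = 0" using ij by simp
  then show ?thesis using ij by (intro exI[of _ "j-i"]) simp
qed

lemma neg_le: "le (- a) a"
proof -
  obtain n where n: "n \<ge> 1" "rep n a = 0" using rep_period by blast
  then obtain m where m: "n = Suc m" by (cases n) auto
  have "a + rep m a = 0" using n m by simp
  then have rm: "rep m a = - a" by (metis add.commute add_eq_0_iff2)
  show ?thesis
  proof (cases "m = 0")
    case True then have "a = 0" using rm by simp
    then show ?thesis by (simp add: refl)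
  next
    case False then show ?thesis using rep_le[of m a] rm by simp
  qed
qed

lemma neg: "- (a::'a) = a"
  using antisym[OF neg_le[of a]] neg_le[of "-a"] by simp

lemma two: "(a::'a) + a = 0"
  by (metis neg add.right_inverse)

lemma zero_le: "le 0 a"
  using closed[OF refl refl, of a] two by simp

lemma indep_sym: "le x (x + y) \<Longrightarrow> le y (y + x)"
proof -
  assume h: "le x (x+y)"
  have "le (x + (x+y)) (x+y)" using closed[OF h refl] .
  moreover have "x + (x + y) = y" using two[of x] by (simp add: add.assoc[symmetric])
  ultimately show ?thesis by (simp add: add.commute)
qed

lemma le_indep_zero: "le t a \<Longrightarrow> le t (t + a) \<Longrightarrow> t = 0"
proof -
  assume h1: "le t a" and h2: "le t (t + a)"
  have "le a (a + t)" using indep_sym[OF h2] .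
  moreover have "le (a + t) a" using closed[OF refl h1] .
  ultimately have "a + t = a" using antisym by blast
  then show "t = 0" by simp
qed

lemma indep_add: "le x (x + y) \<Longrightarrow> le x (x + z) \<Longrightarrow> le x (x + (y + z))"
proof -
  assume "le x (x + y)" "le x (x + z)"
  then have "le x (x + (x + y) + (x + z))" by (rule ax2)
  moreover have "x + (x + y) + (x + z) = (x + x) + (x + (y + z))" by (simp add: algebra_simps)
  ultimately show ?thesis using two[of x] by simp
qed

lemma indep_hered: "le s b \<Longrightarrow> le u (u + b) \<Longrightarrow> le s (s + u)"
proof -
  assume h1: "le s b" and h2: "le u (u + b)"
  have "le b (b + u)" using indep_sym[OF h2] .
  then have "le s (b + u)" using trans h1 by blast
  then have "le s (s + b + (b + u))" using ax2 h1 by blast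
  moreover have "s + b + (b + u) = (b + b) + (s + u)" by (simp add: algebra_simps)
  ultimately show ?thesis using two[of b] by simp
qed

lemma atom_iff: "atom le x \<longleftrightarrow> x \<noteq> 0 \<and> (\<forall>y. le y x \<longrightarrow> y = 0 \<or> y = x)"
  unfolding atom_in_def using zero_le refl by auto

lemma atom_in_tail: "atom_in le (tail le a) x \<longleftrightarrow> atom le x \<and> le x a"
proof
  assume h: "atom_in le (tail le a) x"
  then have xa: "le x a" unfolding atom_in_def tail_def by auto
  have "{y. le y a \<and> le y x} = {0, x}" using h unfolding atom_in_def tail_def by auto
  moreover have "{y. le y a \<and> le y x} = {y. le y x}" using xa trans by blast
  ultimately show "atom le x \<and> le x a" using h xa unfolding atom_in_def by auto
next
  assume h: "atom le x \<and> le x a"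
  have "{y. le y a \<and> le y x} = {y. le y x}" using h trans by blast
  then show "atom_in le (tail le a) x" using h unfolding atom_in_def tail_def by auto
qed

definition pind :: "'a set \<Rightarrow> bool" where
  "pind S \<longleftrightarrow> (\<forall>x\<in>S. \<forall>y\<in>S. x \<noteq> y \<longrightarrow> le x (x + y))"

definition expn :: "'a set \<Rightarrow> 'a \<Rightarrow> bool" where
  "expn S b \<longleftrightarrow> (\<forall>x\<in>S. atom le x) \<and> pind S \<and> (\<Sum>x\<in>S. x) = b"

lemma indep_sum: "finite T \<Longrightarrow> \<forall>y\<in>T. le x (x + y) \<Longrightarrow> le x (x + (\<Sum>y\<in>T. y))"
proof (induction T rule: finite_induct)
  case empty then show ?case by (simp add: refl)
next
  case (insert y F) then show ?case by (simp add: indep_add)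
qed

lemma mem_le_sum: "pind S \<Longrightarrow> x \<in> S \<Longrightarrow> le x (\<Sum>y\<in>S. y)"
proof -
  assume p: "pind S" and x: "x \<in> S"
  have "\<forall>y\<in>S - {x}. le x (x + y)" using p x unfolding pind_def by auto
  then have "le x (x + (\<Sum>y\<in>S - {x}. y))"
    using indep_sum[OF fin_set[of "S - {x}"]] by blast
  then show ?thesis using sum.remove[OF fin_set x, of "\<lambda>y. y"] by simp
qed

lemma sum_le: "\<forall>x\<in>S. le x b \<Longrightarrow> le (\<Sum>x\<in>S. x) b"
  using fin_set[of S]
proof (induction S rule: finite_induct)
  case empty then show ?case by (simp add: zero_le)
next
  case (insert y F) then show ?case by (simp add: closed)
qed

lemma exists_atom: assumes "b \<noteq> 0" shows "\<exists>u. atom le u \<and> le u b"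
proof -
  let ?P = "\<lambda>v. v \<noteq> 0 \<and> le v b"
  obtain u where u: "?P u" "\<And>v. ?P v \<Longrightarrow> card {z. le z u} \<le> card {z. le z v}"
    using ex_has_least_nat[of ?P b "\<lambda>v. card {z. le z v}"] assms refl by blast
  have "atom le u" unfolding atom_iff
  proof (intro conjI allI impI)
    show "u \<noteq> 0" using u by simp
    fix v assume v: "le v u"
    show "v = 0 \<or> v = u"
    proof (rule ccontr)
      assume c: "\<not> (v = 0 \<or> v = u)"
      have pv: "?P v" using c v u trans by blast
      have sub: "{z. le z v} \<subseteq> {z. le z u}" using v trans by blast
      have "u \<notin> {z. le z v}" using v antisym c by blast
      then have "{z. le z v} \<subset> {z. le z u}" using sub refl by blast
      then have "card {z. le z v} < card {z. le z u}" using fin_set by (simp add: psubset_card_mono)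
      then show False using u(2)[OF pv] by simp
    qed
  qed
  then show ?thesis using u by blast
qed

lemma step:
  assumes u: "atom le u" "le u b" and S: "expn S (b + u)"
  shows "u \<notin> S \<and> expn (insert u S) b"
proof -
  have bu: "u + (b + u) = b" using two[of u] by (simp add: algebra_simps)
  have ub: "le u (u + (b + u))" unfolding bu by (rule u(2))
  have u0: "u \<noteq> 0" using u atom_iff by blast
  have sumS: "(\<Sum>x\<in>S. x) = b + u" using S expn_def by blast
  have pS: "pind S" using S expn_def by blast
  have nu: "u \<notin> S"
  proof
    assume "u \<in> S"
    then have "le u (b + u)" using mem_le_sum[OF pS] sumS by metis
    then show False using le_indep_zero ub u0 by blast
  qed
  have si: "\<And>s. s \<in> S \<Longrightarrow> le s (s + u) \<and> le u (u + s)"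
  proof -
    fix s assume s: "s \<in> S"
    have "le s (b + u)" using mem_le_sum[OF pS s] sumS by simp
    then have "le s (s + u)" using indep_hered ub by blast
    then show "le s (s + u) \<and> le u (u + s)" using indep_sym by blast
  qed
  have "pind (insert u S)" using pS si unfolding pind_def by auto
  moreover have "(\<Sum>x\<in>insert u S. x) = b" using nu sumS bu fin_set[of S] by simp
  ultimately show ?thesis using nu S u unfolding expn_def by auto
qed

lemma existence: "\<exists>S. expn S b"
proof (induction "card {z. le z b}" arbitrary: b rule: less_induct)
  case less
  show ?case
  proof (cases "b = 0")
    case True then show ?thesis by (intro exI[of _ "{}"]) (simp add: expn_def pind_def)
  next
    case False
    then obtain u where u: "atom le u" "le u b" using exists_atom by blast
    have u0: "u \<noteq> 0" using u atom_iff by blast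
    have cb: "le (b + u) b" using closed[OF refl u(2)] .
    have "b \<noteq> b + u" using u0 by simp
    then have "{z. le z (b + u)} \<subset> {z. le z b}" using cb trans antisym refl by blast
    then have "card {z. le z (b + u)} < card {z. le z b}" using fin_set by (simp add: psubset_card_mono)
    then obtain S where "expn S (b + u)" using less by blast
    then show ?thesis using step u by blast
  qed
qed

lemma exp_list: "expn S b \<Longrightarrow> \<exists>xs. atom_expansion le b xs \<and> set xs = S \<and> distinct xs"
proof -
  assume e: "expn S b"
  obtain xs where xs: "set xs = S" "distinct xs" using finite_distinct_list[OF fin_set] by blast
  have "atom_expansion le b xs" unfolding atom_expansion_def
  proof (intro conjI allI impI ballI)
    show "\<And>x. x \<in> set xs \<Longrightarrow> atom le x" using e xs unfolding expn_def by auto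
    fix i j assume "i < length xs" "j < length xs" "i \<noteq> j"
    then show "independent le (xs ! i) (xs ! j)"
      using e xs nth_eq_iff_index_eq[of xs i j] nth_mem
      unfolding expn_def pind_def independent_def by metis
  next
    show "sum_list xs = b" using e xs sum_list_distinct_conv_sum_set[of xs "\<lambda>x. x"]
      unfolding expn_def by simp
  qed
  then show ?thesis using xs by blast
qed

lemma list_exp: "atom_expansion le b ys \<Longrightarrow> distinct ys \<and> expn (set ys) b"
proof -
  assume e: "atom_expansion le b ys"
  have d: "distinct ys" unfolding distinct_conv_nth
  proof (intro allI impI)
    fix i j assume ij: "i < length ys" "j < length ys" "i \<noteq> j"
    show "ys ! i \<noteq> ys ! j"
    proof
      assume eq: "ys ! i = ys ! j"
      have "le (ys ! i) (ys ! i + ys ! i)" using e ij eq unfolding atom_expansion_def independent_def by metis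
      then have "ys ! i = 0" using two zero_le antisym by metis
      moreover have "atom le (ys ! i)" using e ij nth_mem unfolding atom_expansion_def by blast
      ultimately show False using atom_iff by blast
    qed
  qed
  have "pind (set ys)" unfolding pind_def
  proof (intro ballI impI)
    fix x y assume "x \<in> set ys" "y \<in> set ys" "x \<noteq> y"
    then obtain i j where "i < length ys" "j < length ys" "x = ys ! i" "y = ys ! j" "i \<noteq> j"
      by (metis in_set_conv_nth)
    then show "le x (x + y)" using e unfolding atom_expansion_def independent_def by blast
  qed
  then show ?thesis using d e sum_list_distinct_conv_sum_set[of ys "\<lambda>x. x"]
    unfolding expn_def atom_expansion_def by simp
qed

lemma sym_sum: "(\<Sum>u\<in>P. u) + (\<Sum>u\<in>Q. u) = (\<Sum>u\<in>(P - Q) \<union> (Q - P). (u::'a))"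
proof -
  have 1: "(\<Sum>u\<in>P. u) = (\<Sum>u\<in>P \<inter> Q. u) + (\<Sum>u\<in>P - Q. u)"
    using sum.Int_Diff[OF fin_set, of "\<lambda>u. u" P Q] by blast
  have 2: "(\<Sum>u\<in>Q. u) = (\<Sum>u\<in>P \<inter> Q. u) + (\<Sum>u\<in>Q - P. u)"
    using sum.Int_Diff[OF fin_set, of "\<lambda>u. u" Q P] by (simp add: Int_commute)
  have 3: "(\<Sum>u\<in>(P - Q) \<union> (Q - P). u) = (\<Sum>u\<in>P - Q. u) + (\<Sum>u\<in>Q - P. u)"
    by (rule sum.union_disjoint) (auto simp: fin_set)
  have "\<And>c d e::'a. c + d + (c + e) = (c + c) + (d + e)" by (simp add: algebra_simps)
  then show ?thesis using 1 2 3 two by simp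
qed

lemma tile_pind: "tile le a \<Longrightarrow> pind {u. atom le u \<and> le u a}"
  unfolding tile_def pind_def tail_def independent_def by auto

lemma atoms_below_sum:
  assumes t: "tile le a" and S: "S \<subseteq> {u. atom le u \<and> le u a}"
  shows "{u. atom le u \<and> le u (\<Sum>x\<in>S. x)} = S"
proof
  have pS: "pind S" using tile_pind[OF t] S unfolding pind_def by blast
  show "S \<subseteq> {u. atom le u \<and> le u (\<Sum>x\<in>S. x)}" using mem_le_sum[OF pS] S by auto
  show "{u. atom le u \<and> le u (\<Sum>x\<in>S. x)} \<subseteq> S"
  proof
    fix u assume u: "u \<in> {u. atom le u \<and> le u (\<Sum>x\<in>S. x)}"
    have "le (\<Sum>x\<in>S. x) a" using sum_le S by auto
    then have ua: "le u a" using u trans by blast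
    then have uT: "u \<in> {u. atom le u \<and> le u a}" using u by blast
    show "u \<in> S"
    proof (rule ccontr)
      assume nu: "u \<notin> S"
      have "\<forall>y\<in>S. le u (u + y)"
      proof
        fix y assume y: "y \<in> S"
        then have "u \<noteq> y" using nu by blast
        then show "le u (u + y)" using tile_pind[OF t] uT y S unfolding pind_def by blast
      qed
      then have "le u (u + (\<Sum>x\<in>S. x))" using indep_sum fin_set by blast
      then have "u = 0" using le_indep_zero u by blast
      then show False using u atom_iff by blast
    qed
  qed
qed

lemma sum_atoms:
  assumes t: "tile le a" and b: "le b a"
  shows "(\<Sum>x\<in>{u. atom le u \<and> le u b}. x) = b"
proof -
  obtain S where S: "expn S b" using existence by blast
  have sub: "S \<subseteq> {u. atom le u \<and> le u a}"
    using S mem_le_sum b trans unfolding expn_def by blast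
  have "{u. atom le u \<and> le u b} = S" using atoms_below_sum[OF t sub] S unfolding expn_def by simp
  then show ?thesis using S unfolding expn_def by simp
qed

lemma tile_iii:
  assumes a0: "a \<noteq> 0"
  shows "tile le a \<longleftrightarrow>
            ((\<forall>x y. atom_in le (tail le a) x \<and> atom_in le (tail le a) y \<and> x \<noteq> y
                 \<longrightarrow> independent le x y)
             \<and> (\<Sum>x\<in>{x. atom_in le (tail le a) x}. x) = a)"
  unfolding atom_in_tail using sum_atoms[OF _ refl] a0 unfolding tile_def tail_def by auto

lemma tile_iv:
  assumes a0: "a \<noteq> 0"
  shows "tile le a \<longleftrightarrow>
            (\<exists>xs. atom_expansion le a xs \<and>
                 (\<forall>ys. atom_expansion le a ys \<longrightarrow> mset ys = mset xs))"
proof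
  assume t: "tile le a"
  define T where "T = {u. atom le u \<and> le u a}"
  have "expn T a" using tile_pind[OF t] sum_atoms[OF t refl] unfolding expn_def T_def by auto
  then obtain xs where xs: "atom_expansion le a xs" "set xs = T" "distinct xs" using exp_list by blast
  have "\<forall>ys. atom_expansion le a ys \<longrightarrow> mset ys = mset xs"
  proof (intro allI impI)
    fix ys assume "atom_expansion le a ys"
    then have ys: "distinct ys" "expn (set ys) a" using list_exp by auto
    have sub: "set ys \<subseteq> T" using ys mem_le_sum unfolding expn_def T_def by blast
    have "set ys = T" using atoms_below_sum[OF t sub[unfolded T_def]] ys unfolding expn_def T_def by simp
    then show "mset ys = mset xs" using xs ys set_eq_iff_mset_eq_distinct by metis
  qed
  then show "\<exists>xs. atom_expansion le a xs \<and> (\<forall>ys. atom_expansion le a ys \<longrightarrow> mset ys = mset xs)"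
    using xs by blast
next
  assume "\<exists>xs. atom_expansion le a xs \<and> (\<forall>ys. atom_expansion le a ys \<longrightarrow> mset ys = mset xs)"
  then obtain xs where xs: "atom_expansion le a xs" "\<And>ys. atom_expansion le a ys \<Longrightarrow> mset ys = mset xs"
    by blast
  have mem: "\<And>u. atom le u \<Longrightarrow> le u a \<Longrightarrow> u \<in> set xs"
  proof -
    fix u assume u: "atom le u" "le u a"
    obtain S where "expn S (a + u)" using existence by blast
    then have "expn (insert u S) a" using step u by blast
    then obtain ys where ys: "atom_expansion le a ys" "set ys = insert u S" using exp_list by blast
    have "mset ys = mset xs" using xs(2) ys(1) .
    then have "set ys = set xs" by (metis set_mset_mset)
    then show "u \<in> set xs" using ys by blast
  qed
  show "tile le a" unfolding tile_def
  proof (intro conjI allI impI)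
    show "a \<noteq> 0" by (rule a0)
    fix x y assume h: "atom le x \<and> atom le y \<and> x \<in> tail le a \<and> y \<in> tail le a \<and> x \<noteq> y"
    then have "x \<in> set xs" "y \<in> set xs" using mem unfolding tail_def by auto
    then obtain i j where "i < length xs" "j < length xs" "x = xs ! i" "y = xs ! j"
      by (metis in_set_conv_nth)
    moreover then have "i \<noteq> j" using h by blast
    ultimately show "independent le x y" using xs(1) unfolding atom_expansion_def by blast
  qed
qed

lemma tile_ii:
  assumes a0: "a \<noteq> 0"
  shows "tile le a \<longleftrightarrow> (\<exists>(I::nat set) f. iso_powerset le (tail le a) f I)"
proof
  assume t: "tile le a"
  define T where "T = {u. atom le u \<and> le u a}"
  define A where "A = (\<lambda>x. {u. atom le u \<and> le u x})"
  obtain h where h: "bij_betw h T {0..<card T}" using ex_bij_betw_finite_nat[OF fin_set] by blast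
  have inj: "inj_on h T" and hT: "h ` T = {0..<card T}" using h unfolding bij_betw_def by auto
  define f where "f = (\<lambda>x. h ` A x)"
  have AT: "\<And>x. x \<in> tail le a \<Longrightarrow> A x \<subseteq> T" unfolding A_def T_def tail_def using trans by blast
  have sumA: "\<And>x. x \<in> tail le a \<Longrightarrow> (\<Sum>u\<in>A x. u) = x"
    unfolding A_def tail_def using sum_atoms[OF t] by blast
  have Asum: "\<And>S. S \<subseteq> T \<Longrightarrow> A (\<Sum>u\<in>S. u) = S"
    unfolding A_def T_def using atoms_below_sum[OF t] by blast
  have sumT: "\<And>S. S \<subseteq> T \<Longrightarrow> (\<Sum>u\<in>S. u) \<in> tail le a"
    unfolding T_def tail_def using sum_le by blast
  have Aadd: "\<And>x y. x \<in> tail le a \<Longrightarrow> y \<in> tail le a \<Longrightarrow> A (x + y) = (A x - A y) \<union> (A y - A x)"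
  proof -
    fix x y assume x: "x \<in> tail le a" and y: "y \<in> tail le a"
    have "x + y = (\<Sum>u\<in>(A x - A y) \<union> (A y - A x). u)" using sumA[OF x] sumA[OF y] sym_sum by metis
    moreover have "(A x - A y) \<union> (A y - A x) \<subseteq> T" using AT[OF x] AT[OF y] by blast
    ultimately show "A (x + y) = (A x - A y) \<union> (A y - A x)" using Asum by simp
  qed
  have Aord: "\<And>x y. x \<in> tail le a \<Longrightarrow> y \<in> tail le a \<Longrightarrow> le x y \<longleftrightarrow> A x \<subseteq> A y"
  proof
    fix x y assume x: "x \<in> tail le a" and y: "y \<in> tail le a"
    show "le x y \<Longrightarrow> A x \<subseteq> A y" unfolding A_def using trans by blast
    assume "A x \<subseteq> A y"
    then have "\<forall>u\<in>A x. le u y" unfolding A_def by blast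
    then show "le x y" using sum_le sumA[OF x] by metis
  qed
  have himg: "\<And>P Q. P \<subseteq> T \<Longrightarrow> Q \<subseteq> T \<Longrightarrow> h ` P \<subseteq> h ` Q \<longleftrightarrow> P \<subseteq> Q"
    using inj_on_image_mem_iff[OF inj] by (smt (verit) image_mono image_subset_iff subset_iff)
  have "iso_powerset le (tail le a) f {0..<card T}" unfolding iso_powerset_def
  proof (intro conjI ballI)
    show "bij_betw f (tail le a) (Pow {0..<card T})" unfolding bij_betw_def
    proof
      show "inj_on f (tail le a)"
      proof (rule inj_onI)
        fix x y assume x: "x \<in> tail le a" and y: "y \<in> tail le a" and e: "f x = f y"
        then have "A x = A y" using inj_on_image_eq_iff[OF inj AT[OF x] AT[OF y]] unfolding f_def by simp
        then show "x = y" using sumA x y by metis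
      qed
      show "f ` tail le a = Pow {0..<card T}"
      proof
        show "f ` tail le a \<subseteq> Pow {0..<card T}" unfolding f_def using AT hT by blast
        show "Pow {0..<card T} \<subseteq> f ` tail le a"
        proof
          fix J assume "J \<in> Pow {0..<card T}"
          then have J: "J \<subseteq> h ` T" using hT by blast
          define S where "S = {u\<in>T. h u \<in> J}"
          have ST: "S \<subseteq> T" unfolding S_def by blast
          have "h ` S = J" using J unfolding S_def by blast
          then have "f (\<Sum>u\<in>S. u) = J" unfolding f_def using Asum[OF ST] by simp
          then show "J \<in> f ` tail le a" using sumT[OF ST] by blast
        qed
      qed
    qed
  next
    fix x y assume x: "x \<in> tail le a" and y: "y \<in> tail le a"
    show "f (x + y) = (f x - f y) \<union> (f y - f x)"
      unfolding f_def Aadd[OF x y] image_Un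
      using inj_on_image_set_diff[OF inj] AT[OF x] AT[OF y] by (metis Diff_subset order_trans)
    show "le x y \<longleftrightarrow> f x \<subseteq> f y" unfolding f_def using Aord[OF x y] himg AT x y by blast
  qed
  then show "\<exists>(I::nat set) f. iso_powerset le (tail le a) f I" by blast
next
  assume "\<exists>(I::nat set) f. iso_powerset le (tail le a) f I"
  then obtain I :: "nat set" and f where iso: "iso_powerset le (tail le a) f I" by blast
  have bij: "bij_betw f (tail le a) (Pow I)"
    and add: "\<And>x y. x \<in> tail le a \<Longrightarrow> y \<in> tail le a \<Longrightarrow> f (x + y) = (f x - f y) \<union> (f y - f x)"
    and ord: "\<And>x y. x \<in> tail le a \<Longrightarrow> y \<in> tail le a \<Longrightarrow> le x y \<longleftrightarrow> f x \<subseteq> f y"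
    using iso unfolding iso_powerset_def by auto
  have injf: "inj_on f (tail le a)" using bij bij_betw_def by blast
  have z: "0 \<in> tail le a" by (simp add: tail_def zero_le)
  have f0: "f 0 = {}" using add[OF z z] by simp
  have sing: "\<And>x. atom le x \<Longrightarrow> x \<in> tail le a \<Longrightarrow> \<exists>i. f x = {i}"
  proof -
    fix x assume xa: "atom le x" and xt: "x \<in> tail le a"
    have x0: "x \<noteq> 0" using xa atom_iff by blast
    have "f x \<noteq> {}" using injf xt z f0 x0 by (metis inj_onD)
    then obtain i where i: "i \<in> f x" by blast
    have "f x \<in> Pow I" using bij xt bij_betwE by blast
    then have "{i} \<in> Pow I" using i by auto
    then obtain w where w: "w \<in> tail le a" "f w = {i}" using bij
      by (metis bij_betw_imp_surj_on imageE)
    then have "le w x" using ord xt i by auto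
    then have "w = 0 \<or> w = x" using xa atom_iff by blast
    then have "w = x" using w f0 by auto
    then show "\<exists>i. f x = {i}" using w by blast
  qed
  show "tile le a" unfolding tile_def
  proof (intro conjI allI impI)
    show "a \<noteq> 0" by (rule a0)
    fix x y assume h: "atom le x \<and> atom le y \<and> x \<in> tail le a \<and> y \<in> tail le a \<and> x \<noteq> y"
    obtain i where i: "f x = {i}" using sing h by blast
    obtain j where j: "f y = {j}" using sing h by blast
    have "i \<noteq> j" using injf h i j by (metis inj_onD)
    have xy: "x + y \<in> tail le a" using closed h unfolding tail_def by blast
    have "f (x + y) = {i, j}" using add h i j \<open>i \<noteq> j\<close> by auto
    then have "f x \<subseteq> f (x + y)" using i by auto
    then show "independent le x y" using ord xy h unfolding independent_def by blast
  qed
qed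

end

theorem theorem6p4:
  fixes le :: "'a::ab_group_add \<Rightarrow> 'a \<Rightarrow> bool" and a :: 'a
  assumes "additive_poset le" and "finite (UNIV :: 'a set)" and "a \<noteq> 0"
  shows "(tile le a \<longleftrightarrow> (\<exists>(I::nat set) f. iso_powerset le (tail le a) f I))
       \<and> (tile le a \<longleftrightarrow>
            ((\<forall>x y. atom_in le (tail le a) x \<and> atom_in le (tail le a) y \<and> x \<noteq> y
                 \<longrightarrow> independent le x y)
             \<and> (\<Sum>x\<in>{x. atom_in le (tail le a) x}. x) = a))
       \<and> (tile le a \<longleftrightarrow>
            (\<exists>xs. atom_expansion le a xs \<and>
                 (\<forall>ys. atom_expansion le a ys \<longrightarrow> mset ys = mset xs)))"
proof -
  interpret ap le using assms(1,2) by unfold_locales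
  show ?thesis using tile_ii[OF assms(3)] tile_iii[OF assms(3)] tile_iv[OF assms(3)] by blast
qed

end
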